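(* Let $p\in(0,1]$ and let $Q=(q_{j,k})_{j,k\geq 0}$ be the generator on $\mathbb N_0$ given by $q_{j,j+1}=jp$, $q_{j,k}=\binom{j}{k}p^k(1-p)^{j-k}$ for $0\leq k\leq j-1$, $q_{j,j}=-(jp+1-p^j)$, and $q_{j,k}=0$ otherwise. Suppose $(a_k)_{k\geq 1}$ is a quasi-stationary distribution for $Q$ with eigenvalue $-\lambda$, i.e. $a_k\geq 0$, $\sum_{k\geq 1}a_k=1$ and $\sum_{j\geq 1}a_jq_{j,k}=-\lambda a_k$ for every $k\geq 1$, and suppose that $a$ has finite mean, $\sum_{k\geq1}ka_k<\infty$. Then $\lambda=1-2p$.
   Context: $Q$ is the generator of the degree of a tracked vertex in the continuous-time partial duplication graph; state $0$ is absorbing. A quasi-stationary distribution is a non-negative left eigenvector of $Q$ restricted to $\mathbb N=\{1,2,\dots\}$, summing to $1$. *)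

theory Defs
  imports "HOL-Analysis.Analysis"
begin

text \<open>Generator of the degree of a tracked vertex in the continuous-time
partial duplication graph, with parameter p.\<close>
definition pdQ :: "real \<Rightarrow> nat \<Rightarrow> nat \<Rightarrow> real" where
  "pdQ p j k =
     (if k = j + 1 then real j * p
      else if k < j then real (j choose k) * p ^ k * (1 - p) ^ (j - k)
      else if k = j then - (real j * p + 1 - p ^ j)
      else 0)"

definition is_qsd :: "real \<Rightarrow> (nat \<Rightarrow> real) \<Rightarrow> real \<Rightarrow> bool" where
  "is_qsd p a lam \<longleftrightarrow>
     (\<forall>k\<ge>1. a k \<ge> 0) \<and>
     (a has_sum 1) {1..} \<and>
     (\<forall>k\<ge>1. ((\<lambda>j. a j * pdQ p j k) has_sum (- lam * a k)) {1..})"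

end

theory Submission
  imports Defs
begin

lemma hs_diff:
  fixes f g :: "'a \<Rightarrow> real"
  assumes "(f has_sum x) A" "(g has_sum y) A"
  shows "((\<lambda>j. f j - g j) has_sum (x - y)) A"
proof -
  have "((\<lambda>j. - g j) has_sum (- y)) A" using assms(2) by (simp add: has_sum_uminus)
  from has_sum_add[OF assms(1) this] show ?thesis by simp
qed

lemma hs_sum:
  fixes f :: "'b \<Rightarrow> 'a \<Rightarrow> real"
  assumes "finite I" "\<And>i. i \<in> I \<Longrightarrow> (f i has_sum s i) A"
  shows "((\<lambda>j. \<Sum>i\<in>I. f i j) has_sum (\<Sum>i\<in>I. s i)) A"
  using assms
proof (induction I rule: finite_induct)
  case empty
  then show ?case by simp
next
  case (insert x F)
  have "((\<lambda>j. f x j + (\<Sum>i\<in>F. f i j)) has_sum (s x + (\<Sum>i\<in>F. s i))) A"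
    using insert by (intro has_sum_add) auto
  then show ?case using insert by simp
qed

lemma binom_mean:
  fixes x y :: real
  shows "(\<Sum>k\<le>j. real k * (real (j choose k) * x ^ k * y ^ (j - k))) = real j * x * (x + y) ^ (j - 1)"
proof (cases j)
  case 0
  then show ?thesis by simp
next
  case (Suc n)
  have "(\<Sum>k\<le>Suc n. real k * (real (Suc n choose k) * x ^ k * y ^ (Suc n - k)))
      = (\<Sum>k\<le>n. real (Suc k) * (real (Suc n choose Suc k) * x ^ Suc k * y ^ (Suc n - Suc k)))"
    by (subst sum.atMost_Suc_shift) simp
  also have "\<dots> = (\<Sum>k\<le>n. real (Suc n) * x * (real (n choose k) * x ^ k * y ^ (n - k)))"
  proof (rule sum.cong)
    fix k assume "k \<in> {..n}"
    have "real (Suc k) * real (Suc n choose Suc k) = real (Suc n) * real (n choose k)"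
      by (metis Suc_times_binomial of_nat_mult)
    show "real (Suc k) * (real (Suc n choose Suc k) * x ^ Suc k * y ^ (Suc n - Suc k))
        = real (Suc n) * x * (real (n choose k) * x ^ k * y ^ (n - k))"
    proof -
      have "real (Suc k) * (real (Suc n choose Suc k) * x ^ Suc k * y ^ (Suc n - Suc k))
          = (real (Suc k) * real (Suc n choose Suc k)) * (x * x ^ k * y ^ (n - k))"
        by (simp only: power_Suc diff_Suc_Suc mult_ac)
      also have "\<dots> = (real (Suc n) * real (n choose k)) * (x * x ^ k * y ^ (n - k))"
        by (simp only: \<open>real (Suc k) * real (Suc n choose Suc k) = real (Suc n) * real (n choose k)\<close>)
      also have "\<dots> = real (Suc n) * x * (real (n choose k) * x ^ k * y ^ (n - k))"
        by (simp only: mult_ac)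
      finally show ?thesis .
    qed
  qed simp
  also have "\<dots> = real (Suc n) * x * (x + y) ^ n"
    by (simp add: binomial_ring sum_distrib_left)
  finally show ?thesis using Suc by simp
qed

lemma alg_id:
  fixes a :: "nat \<Rightarrow> real" and p lam :: real
  shows "(\<Sum>k=1..N. real k * (- lam * a k - (real (k - 1) * p * a (k - 1) - (real k * p + 1 - p ^ k) * a k)))
     - (\<Sum>j=1..N. a j * (real j * p - real j * p ^ j))
   = p * real N * (real N + 1) * a N - (2 * p - 1 + lam) * (\<Sum>k=1..N. real k * a k)"
proof (induction N)
  case 0
  then show ?case by simp
next
  case (Suc N)
  show ?case
    using Suc by (simp add: sum.cl_ivl_Suc algebra_simps)
qed

theorem proposition2:
  fixes p lam :: real and a :: "nat \<Rightarrow> real"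
  assumes "0 < p" and "p \<le> 1"
    and "is_qsd p a lam"
    and "(\<lambda>k. real k * a k) summable_on {1..}"
  shows "lam = 1 - 2 * p"
proof -
  from assms(3) have anonneg: "\<And>k. k \<ge> 1 \<Longrightarrow> a k \<ge> 0"
    and asum: "(a has_sum 1) {1..}"
    and aeq: "\<And>k. k \<ge> 1 \<Longrightarrow> ((\<lambda>j. a j * pdQ p j k) has_sum (- lam * a k)) {1..}"
    unfolding is_qsd_def by auto
  define m where "m = infsum (\<lambda>k. real k * a k) {1..}"
  have mhs: "((\<lambda>k. real k * a k) has_sum m) {1..}" using assms(4) m_def by simp
  have m1: "1 \<le> m"
  proof (rule has_sum_mono[OF asum mhs])
    fix x :: nat assume "x \<in> {1..}"
    then have "x \<ge> 1" by simp
    then have "1 * a x \<le> real x * a x" using anonneg[OF \<open>x \<ge> 1\<close>]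
      by (intro mult_right_mono) auto
    then show "a x \<le> real x * a x" by simp
  qed
  define f where "f j k = (if k < j then a j * (real (j choose k) * p ^ k * (1 - p) ^ (j - k)) else 0)" for j k :: nat
  define u where "u k j = (if j + 1 = k then a j * (real j * p) else if j = k then a j * (- (real j * p + 1 - p ^ j)) else 0)" for k j :: nat
  have split: "a j * pdQ p j k = u k j + f j k" for j k
    unfolding pdQ_def u_def f_def by (simp split: if_split)
  define U where "U k = real (k - 1) * p * a (k - 1) - (real k * p + 1 - p ^ k) * a k" for k
  have uhs: "(u k has_sum U k) {1..}" if "k \<ge> 1" for k
  proof (cases "k = 1")
    case True
    show ?thesis
      apply (rule has_sum_finite_neutralI[where B="{1}"])
      apply (simp_all add: True u_def U_def)
      done
  next
    case False
    then have k2: "k \<ge> 2" using that by simp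
    have ne: "k - 1 \<noteq> k" using k2 by simp
    show ?thesis
      apply (rule has_sum_finite_neutralI[where B="{k-1,k}"])
      using k2 ne apply (simp_all add: u_def U_def)
      apply force
      apply (simp add: algebra_simps)
      done
  qed
  define D where "D k = - lam * a k - U k" for k
  have fhs: "((\<lambda>j. f j k) has_sum D k) {1..}" if "k \<ge> 1" for k
  proof -
    have "((\<lambda>j. a j * pdQ p j k - u k j) has_sum (- lam * a k - U k)) {1..}"
      by (rule hs_diff[OF aeq[OF that] uhs[OF that]])
    then show ?thesis by (simp add: split D_def)
  qed
  define G where "G N j = (\<Sum>k=1..N. real k * f j k)" for N j
  have Ghs: "((G N) has_sum (\<Sum>k=1..N. real k * D k)) {1..}" for N
    unfolding G_def
    apply (rule hs_sum[where f="\<lambda>k j. real k * f j k"])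
     apply simp
    apply (rule has_sum_cmult_right)
    apply (rule fhs)
    apply simp
    done
  define h where "h j k = real k * (real (j choose k) * p ^ k * (1 - p) ^ (j - k))" for j k :: nat
  have bm: "(\<Sum>k\<le>j. h j k) = real j * p" for j
    using binom_mean[of j p "1 - p"] unfolding h_def by simp
  have hnn: "h j k \<ge> 0" for j k
    unfolding h_def using assms(1,2) by (auto intro!: mult_nonneg_nonneg zero_le_power)
  have bm2: "(\<Sum>k\<in>{1..<j}. h j k) = real j * p - real j * p ^ j" for j
  proof (cases j)
    case 0 then show ?thesis by simp
  next
    case (Suc n)
    have "(\<Sum>k\<le>j. h j k) = (\<Sum>k<j. h j k) + h j j"
      using Suc by (simp add: lessThan_Suc_atMost[symmetric])
    moreover have "(\<Sum>k<j. h j k) = (\<Sum>k\<in>{1..<j}. h j k)"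
    proof -
      have "{..<j} = insert 0 {1..<j}" using Suc by auto
      then show ?thesis by (simp add: h_def)
    qed
    moreover have "h j j = real j * p ^ j" by (simp add: h_def)
    ultimately show ?thesis using bm[of j] by simp
  qed
  have Gform: "G N j = a j * (\<Sum>k\<in>{k\<in>{1..N}. k < j}. h j k)" for N j
  proof -
    have "G N j = (\<Sum>k\<in>{1..N}. if k < j then a j * h j k else 0)"
      unfolding G_def by (rule sum.cong) (auto simp: f_def h_def)
    also have "\<dots> = (\<Sum>k\<in>{k\<in>{1..N}. k < j}. a j * h j k)"
      by (rule sum.inter_filter[symmetric]) simp
    finally show ?thesis by (simp add: sum_distrib_left)
  qed
  have G1: "G N j = a j * (real j * p - real j * p ^ j)" if "j \<le> N" for N j
  proof -
    have "{k\<in>{1..N}. k < j} = {1..<j}" using that by auto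
    then show ?thesis using Gform bm2 by simp
  qed
  have G2: "0 \<le> G N j \<and> G N j \<le> p * (real j * a j)" if "j \<ge> 1" for N j
  proof -
    have s0: "0 \<le> (\<Sum>k\<in>{k\<in>{1..N}. k < j}. h j k)" using hnn by (simp add: sum_nonneg)
    have "(\<Sum>k\<in>{k\<in>{1..N}. k < j}. h j k) \<le> (\<Sum>k\<le>j. h j k)"
      by (rule sum_mono2) (auto simp: hnn)
    then have s1: "(\<Sum>k\<in>{k\<in>{1..N}. k < j}. h j k) \<le> real j * p" using bm by simp
    have an: "a j \<ge> 0" using anonneg that by simp
    have "0 \<le> G N j" using Gform s0 an by simp
    moreover have "G N j \<le> a j * (real j * p)" unfolding Gform using s1 an by (intro mult_left_mono) auto
    ultimately show ?thesis by (simp add: algebra_simps)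
  qed
  define T where "T N = (\<Sum>k=1..N. real k * D k) - (\<Sum>j=1..N. G N j)" for N
  have Ths: "((\<lambda>j. if j \<le> N then 0 else G N j) has_sum T N) {1..}" for N
  proof -
    have "((\<lambda>j. if j \<le> N then G N j else 0) has_sum (\<Sum>j=1..N. G N j)) {1..}"
      by (rule has_sum_finite_neutralI[where B="{1..N}"]) auto
    from hs_diff[OF Ghs this] have "((\<lambda>j. G N j - (if j \<le> N then G N j else 0)) has_sum T N) {1..}"
      unfolding T_def .
    then show ?thesis by (rule has_sum_cong[THEN iffD1, rotated]) auto
  qed
  define S where "S N = (\<Sum>k=1..N. real k * a k)" for N
  have Shs: "((\<lambda>j. if j \<le> N then 0 else p * (real j * a j)) has_sum (p * (m - S N))) {1..}" for N
  proof -
    have "((\<lambda>j. if j \<le> N then real j * a j else 0) has_sum S N) {1..}"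
      unfolding S_def by (rule has_sum_finite_neutralI[where B="{1..N}"]) auto
    from hs_diff[OF mhs this] have "((\<lambda>j. real j * a j - (if j \<le> N then real j * a j else 0)) has_sum (m - S N)) {1..}" .
    then have "((\<lambda>j. if j \<le> N then 0 else real j * a j) has_sum (m - S N)) {1..}"
      by (rule has_sum_cong[THEN iffD1, rotated]) auto
    from has_sum_cmult_right[OF this, of p] show ?thesis
      by (rule has_sum_cong[THEN iffD1, rotated]) auto
  qed
  have T0: "0 \<le> T N" for N
    by (rule has_sum_mono[OF has_sum_0_simp Ths]) (use G2 in auto)
  have T1: "T N \<le> p * (m - S N)" for N
    by (rule has_sum_mono[OF Ths Shs]) (use G2 in auto)
  define c where "c = 2 * p - 1 + lam"
  have key: "p * real N * (real N + 1) * a N = c * S N + T N" for N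
  proof -
    have "(\<Sum>j=1..N. G N j) = (\<Sum>j=1..N. a j * (real j * p - real j * p ^ j))"
      by (rule sum.cong) (auto simp: G1)
    then have "T N = (\<Sum>k=1..N. real k * (- lam * a k - (real (k - 1) * p * a (k - 1) - (real k * p + 1 - p ^ k) * a k)))
     - (\<Sum>j=1..N. a j * (real j * p - real j * p ^ j))"
      unfolding T_def D_def U_def by simp
    then show ?thesis using alg_id[of lam a p N] unfolding c_def S_def by simp
  qed
  have huniv: "((\<lambda>k. real k * a k) has_sum m) UNIV"
    using mhs by (subst (asm) has_sum_cong_neutral[where T=UNIV and g="\<lambda>k. real k * a k"]) auto
  then have sm: "(\<lambda>k. real k * a k) sums m" by (rule has_sum_imp_sums)
  then have summ: "summable (\<lambda>k. real k * a k)" by (rule sums_summable)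
  have SS: "S N = (\<Sum>k<Suc N. real k * a k)" for N
  proof -
    have "{..<Suc N} = insert 0 {1..N}" by auto
    then show ?thesis unfolding S_def by simp
  qed
  have Slim: "S \<longlonglongrightarrow> m"
  proof -
    have "(\<lambda>n. \<Sum>k<n. real k * a k) \<longlonglongrightarrow> m" using sm by (simp add: sums_def)
    then have "(\<lambda>n. \<Sum>k<Suc n. real k * a k) \<longlonglongrightarrow> m" by (rule LIMSEQ_Suc)
    moreover have "S = (\<lambda>n. \<Sum>k<Suc n. real k * a k)" using SS by (intro ext)
    ultimately show ?thesis by simp
  qed
  have lhs0: "0 \<le> p * real N * (real N + 1) * a N" for N
  proof (cases "N = 0")
    case True then show ?thesis by simp
  next
    case False then have "a N \<ge> 0" using anonneg by simp
    then show ?thesis using assms(1) by simp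
  qed
  have "c = 0"
  proof (rule ccontr)
    assume "c \<noteq> 0"
    then consider "c > 0" | "c < 0" by linarith
    then show False
    proof cases
      case 1
      have "eventually (\<lambda>N. S N > m / 2) sequentially"
        using order_tendstoD(1)[OF Slim, of "m / 2"] m1 by simp
      moreover have "eventually (\<lambda>N. N \<ge> 1) sequentially" by (simp add: eventually_ge_at_top)
      ultimately have ev: "eventually (\<lambda>N. norm (inverse (real N)) \<le> (4 * p / (c * m)) * (real N * a N)) sequentially"
      proof eventually_elim
        case (elim N)
        have aN: "a N \<ge> 0" using anonneg elim by simp
        have "c * (m / 2) < c * S N" using elim 1 by simp
        also have "\<dots> \<le> p * real N * (real N + 1) * a N" using key[of N] T0[of N] by simp
        also have "\<dots> \<le> p * real N * (2 * real N) * a N"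
          using elim aN assms(1) by (intro mult_right_mono mult_left_mono) auto
        finally have "c * m < 4 * p * (real N * real N * a N)" by (simp add: algebra_simps)
        moreover have "c * m > 0" using 1 m1 by simp
        moreover have "real N > 0" using elim by simp
        ultimately show ?case using assms(1) by (simp add: field_simps)
      qed
      have "summable (\<lambda>N. (4 * p / (c * m)) * (real N * a N))"
        using summ by (rule summable_mult)
      with ev have "summable (\<lambda>N. inverse (real N))"
        by (rule summable_comparison_test_ev)
      then show False using not_summable_harmonic[where 'a=real] by simp
    next
      case 2
      have "(\<lambda>N. c * S N + p * (m - S N)) \<longlonglongrightarrow> c * m + p * (m - m)"
        by (intro tendsto_intros Slim)
      then have "eventually (\<lambda>N. c * S N + p * (m - S N) < 0) sequentially"
      proof -
        have "c * m < 0" using 2 m1 by (simp add: mult_neg_pos)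
        then show ?thesis using order_tendstoD(2)[OF \<open>(\<lambda>N. c * S N + p * (m - S N)) \<longlonglongrightarrow> c * m + p * (m - m)\<close>, of 0] by simp
      qed
      then obtain N where "c * S N + p * (m - S N) < 0"
        by (auto simp: eventually_sequentially)
      then have "p * real N * (real N + 1) * a N < 0" using key[of N] T1[of N] by simp
      then show False using lhs0[of N] by simp
    qed
  qed
  then show ?thesis unfolding c_def by simp
qed

end
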